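(* Let $T$ be a monoid and $(X,\cdot)$ an order-preserving left action of $T$ on a semilattice $X$ with identity. Then the $*$-left Ehresmann monoid $\mathcal{P}_\ell(T,X)$ has proper basis $H^{\mathcal{P}}=\{te:t\in T,e\in X\}$. Moreover, for any $\alpha\in\mathcal{P}_\ell(T,X)$ with $H^{\mathcal{P}}$-canonical form $\alpha=h_1\cdots h_n$, we have $\alpha^+=h_1^+$ and $\alpha^*=h_n^*$.
   Context: A semilattice is a commutative semigroup of idempotents, ordered by $e\le f$ iff $ef=e$. An order-preserving left action satisfies $1_T\cdot x=x$, $s\cdot(t\cdot x)=st\cdot x$, $x\le y\Rightarrow t\cdot x\le t\cdot y$. Construction: let $T*X$ be the semigroup free product; it acts on $X$ with elements of $X$ acting by multiplication; put $\omega^+=\omega\cdot1_X$; let $\sim$ be the semigroup congruence generated by $\{(\alpha^+\alpha,\alpha)\}\cup\{(1_T,1_X)\}$ and $\mathcal{P}_\ell(T,X)=(T*X)/\sim$ with $[\alpha]^+=[\alpha^+]$; identify $X$ and $T$ with their (injective) images $\{[x]\}$, $\{[t]\}$. It is known that $\mathcal{P}_\ell(T,X)$ is left Ehresmann with projections $X$, generated by $X\cup T$, with unique $T$-normal forms ($t_0e_1t_1\cdots e_nt_n$, $n\ge0$, $e_i\in X\setminus\{1\}$, $t_1,\dots,t_{n-1}\in T\setminus\{1\}$, $e_i<(t_ie_{i+1}\cdots e_nt_n)^+$), and each $\sigma$-class contains exactly one element of $T$. It becomes $*$-left Ehresmann via $a^*=e_n$ if $n\ge1$ and $t_n=1$ in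 the $T$-normal form, $a^*=1$ otherwise. A $*$-left Ehresmann monoid is a monoid with unary operations $+,*$ satisfying $x^+x=x$, $(x^+y^+)^+=x^+y^+$, $x^+y^+=y^+x^+$, $(xy)^+=(xy^+)^+$, $xx^*=x$, $(x^* )^*=x^*$, $x^*y^*=y^*x^*$, $(xy^* )^*y^*=(xy^* )^*$, $(x^* )^+=x^*$, $(x^+)^*=x^+$; $E=\{a^+\}=\{a^*\}$; $\sigma$ is the least monoid congruence containing $E\times E$. $H\subseteq M$ is atomic if: (H1) $E\subseteq H$; (H2) $h\in H,e\in E$ imply $he\in H$ and $(he)^*=h^*e$; (H3) if $h\in H$, $k\in H\setminus E$, $h^*\ge k^+$ then $hk\in H$ and $(hk)^*=k^*$; (H4) every $m$ is $\sigma$-related to some $h\in H$; (H5) if $h,k,w\in H$, $hk\,\sigma\,w$, $k^*=w^*$, then some $u\in H$ has $u\,\sigma\,h$, $u^*\ge k^+$. $H$ is proper if ($h^*=k^*$ and $h\,\sigma\,k$) iff $h=k$. $h_1\cdots h_n$ is in $H$-canonical form if $h_i^*<h_{i+1}^+$ ($1\le i<n$) and $h_i\notin E$ ($2\le i\le n$); $M$ has $H$-canonical forms if each element has exactly one such expression. A basis is an atomic generating set $H$ for which $M$ has $H$-canonical forms; a proper basis is a basis which is proper. *)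

theory Defs
  imports Main
begin

text \<open>A monoid M is given by a carrier C, a multiplication mul, an identity one,
and unary operations pl (the +) and st (the *).\<close>

definition projs :: "'m set \<Rightarrow> ('m \<Rightarrow> 'm) \<Rightarrow> 'm set" where
  "projs C pl = pl ` C"

definition ple :: "('m \<Rightarrow> 'm \<Rightarrow> 'm) \<Rightarrow> 'm \<Rightarrow> 'm \<Rightarrow> bool" where
  "ple mul e f \<longleftrightarrow> mul e f = e"

definition plt :: "('m \<Rightarrow> 'm \<Rightarrow> 'm) \<Rightarrow> 'm \<Rightarrow> 'm \<Rightarrow> bool" where
  "plt mul e f \<longleftrightarrow> ple mul e f \<and> e \<noteq> f"

inductive sigma :: "'m set \<Rightarrow> ('m \<Rightarrow> 'm \<Rightarrow> 'm) \<Rightarrow> ('m \<Rightarrow> 'm) \<Rightarrow> 'm \<Rightarrow> 'm \<Rightarrow> bool"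
  for C mul pl where
  sig_base: "e \<in> projs C pl \<Longrightarrow> f \<in> projs C pl \<Longrightarrow> sigma C mul pl e f"
| sig_refl: "a \<in> C \<Longrightarrow> sigma C mul pl a a"
| sig_sym: "sigma C mul pl a b \<Longrightarrow> sigma C mul pl b a"
| sig_trans: "sigma C mul pl a b \<Longrightarrow> sigma C mul pl b c \<Longrightarrow> sigma C mul pl a c"
| sig_left: "sigma C mul pl a b \<Longrightarrow> c \<in> C \<Longrightarrow> sigma C mul pl (mul c a) (mul c b)"
| sig_right: "sigma C mul pl a b \<Longrightarrow> c \<in> C \<Longrightarrow> sigma C mul pl (mul a c) (mul b c)"

definition atomic ::
  "'m set \<Rightarrow> ('m \<Rightarrow> 'm \<Rightarrow> 'm) \<Rightarrow> ('m \<Rightarrow> 'm) \<Rightarrow> ('m \<Rightarrow> 'm) \<Rightarrow> 'm set \<Rightarrow> bool" where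
  "atomic C mul pl st H \<longleftrightarrow>
     H \<subseteq> C \<and>
     \<comment> \<open>(H1)\<close>
     projs C pl \<subseteq> H \<and>
     \<comment> \<open>(H2)\<close>
     (\<forall>h\<in>H. \<forall>e\<in>projs C pl. mul h e \<in> H \<and> st (mul h e) = mul (st h) e) \<and>
     \<comment> \<open>(H3)\<close>
     (\<forall>h\<in>H. \<forall>k\<in>H - projs C pl. ple mul (pl k) (st h) \<longrightarrow>
        mul h k \<in> H \<and> st (mul h k) = st k) \<and>
     \<comment> \<open>(H4)\<close>
     (\<forall>m\<in>C. \<exists>h\<in>H. sigma C mul pl m h) \<and>
     \<comment> \<open>(H5)\<close>
     (\<forall>h\<in>H. \<forall>k\<in>H. \<forall>w\<in>H. sigma C mul pl (mul h k) w \<and> st k = st w \<longrightarrow>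
        (\<exists>u\<in>H. sigma C mul pl u h \<and> ple mul (pl k) (st u)))"

definition proper_set ::
  "'m set \<Rightarrow> ('m \<Rightarrow> 'm \<Rightarrow> 'm) \<Rightarrow> ('m \<Rightarrow> 'm) \<Rightarrow> ('m \<Rightarrow> 'm) \<Rightarrow> 'm set \<Rightarrow> bool" where
  "proper_set C mul pl st H \<longleftrightarrow>
     (\<forall>h\<in>H. \<forall>k\<in>H. (st h = st k \<and> sigma C mul pl h k) \<longleftrightarrow> h = k)"

inductive_set mgen :: "('m \<Rightarrow> 'm \<Rightarrow> 'm) \<Rightarrow> 'm \<Rightarrow> 'm set \<Rightarrow> 'm set"
  for mul one H where
  mgen_one: "one \<in> mgen mul one H"
| mgen_gen: "h \<in> H \<Longrightarrow> h \<in> mgen mul one H"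
| mgen_mul: "a \<in> mgen mul one H \<Longrightarrow> b \<in> mgen mul one H \<Longrightarrow> mul a b \<in> mgen mul one H"

definition generates :: "'m set \<Rightarrow> ('m \<Rightarrow> 'm \<Rightarrow> 'm) \<Rightarrow> 'm \<Rightarrow> 'm set \<Rightarrow> bool" where
  "generates C mul one H \<longleftrightarrow> C \<subseteq> mgen mul one H"

fun lprod :: "('m \<Rightarrow> 'm \<Rightarrow> 'm) \<Rightarrow> 'm list \<Rightarrow> 'm" where
  "lprod mul [h] = h"
| "lprod mul (h # hs) = mul h (lprod mul hs)"
| "lprod mul [] = undefined"

definition canonical ::
  "'m set \<Rightarrow> ('m \<Rightarrow> 'm \<Rightarrow> 'm) \<Rightarrow> ('m \<Rightarrow> 'm) \<Rightarrow> ('m \<Rightarrow> 'm) \<Rightarrow> 'm set \<Rightarrow> 'm list \<Rightarrow> bool" where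
  "canonical C mul pl st H hs \<longleftrightarrow>
     hs \<noteq> [] \<and> set hs \<subseteq> H \<and>
     (\<forall>i. Suc i < length hs \<longrightarrow> plt mul (st (hs ! i)) (pl (hs ! Suc i))) \<and>
     (\<forall>i. 0 < i \<and> i < length hs \<longrightarrow> hs ! i \<notin> projs C pl)"

definition has_canonical_forms ::
  "'m set \<Rightarrow> ('m \<Rightarrow> 'm \<Rightarrow> 'm) \<Rightarrow> ('m \<Rightarrow> 'm) \<Rightarrow> ('m \<Rightarrow> 'm) \<Rightarrow> 'm set \<Rightarrow> bool" where
  "has_canonical_forms C mul pl st H \<longleftrightarrow>
     (\<forall>a\<in>C. \<exists>!hs. canonical C mul pl st H hs \<and> lprod mul hs = a)"

definition basis ::
  "'m set \<Rightarrow> ('m \<Rightarrow> 'm \<Rightarrow> 'm) \<Rightarrow> 'm \<Rightarrow> ('m \<Rightarrow> 'm) \<Rightarrow> ('m \<Rightarrow> 'm) \<Rightarrow> 'm set \<Rightarrow> bool" where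
  "basis C mul one pl st H \<longleftrightarrow>
     atomic C mul pl st H \<and> generates C mul one H \<and> has_canonical_forms C mul pl st H"

definition proper_basis ::
  "'m set \<Rightarrow> ('m \<Rightarrow> 'm \<Rightarrow> 'm) \<Rightarrow> 'm \<Rightarrow> ('m \<Rightarrow> 'm) \<Rightarrow> ('m \<Rightarrow> 'm) \<Rightarrow> 'm set \<Rightarrow> bool" where
  "proper_basis C mul one pl st H \<longleftrightarrow>
     basis C mul one pl st H \<and> proper_set C mul pl st H"

definition order_preserving_action :: "('t::monoid_mult \<Rightarrow> 'x::bounded_semilattice_inf_top \<Rightarrow> 'x) \<Rightarrow> bool" where
  "order_preserving_action act \<longleftrightarrow>
     (\<forall>x. act 1 x = x) \<and>
     (\<forall>s t x. act s (act t x) = act (s * t) x) \<and>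
     (\<forall>t x y. x \<le> y \<longrightarrow> act t x \<le> act t y)"

text \<open>Words over T + X. Nonempty words, modulo merging adjacent letters from the same
factor, form the semigroup free product T*X.\<close>

type_synonym ('t, 'x) word = "('t + 'x) list"

fun wact :: "('t \<Rightarrow> 'x::semilattice_inf \<Rightarrow> 'x) \<Rightarrow> ('t, 'x) word \<Rightarrow> 'x \<Rightarrow> 'x" where
  "wact act [] x = x"
| "wact act (Inl t # w) x = act t (wact act w x)"
| "wact act (Inr e # w) x = inf e (wact act w x)"

definition wplus :: "('t \<Rightarrow> 'x::bounded_semilattice_inf_top \<Rightarrow> 'x) \<Rightarrow> ('t, 'x) word \<Rightarrow> 'x" where
  "wplus act w = wact act w top"

text \<open>The quotient is P_l(T,X) = (T*X)/~.\<close>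
inductive pcong :: "('t::monoid_mult \<Rightarrow> 'x::bounded_semilattice_inf_top \<Rightarrow> 'x)
    \<Rightarrow> ('t, 'x) word \<Rightarrow> ('t, 'x) word \<Rightarrow> bool" for act where
  pc_mergeT: "pcong act [Inl s, Inl t] [Inl (s * t)]"
| pc_mergeX: "pcong act [Inr e, Inr f] [Inr (inf e f)]"
| pc_plus: "w \<noteq> [] \<Longrightarrow> pcong act (Inr (wplus act w) # w) w"
| pc_one: "pcong act [Inl 1] [Inr top]"
| pc_refl: "w \<noteq> [] \<Longrightarrow> pcong act w w"
| pc_sym: "pcong act u v \<Longrightarrow> pcong act v u"
| pc_trans: "pcong act u v \<Longrightarrow> pcong act v w \<Longrightarrow> pcong act u w"
| pc_left: "pcong act u v \<Longrightarrow> w \<noteq> [] \<Longrightarrow> pcong act (w @ u) (w @ v)"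
| pc_right: "pcong act u v \<Longrightarrow> w \<noteq> [] \<Longrightarrow> pcong act (u @ w) (v @ w)"

definition pcls :: "('t::monoid_mult \<Rightarrow> 'x::bounded_semilattice_inf_top \<Rightarrow> 'x)
    \<Rightarrow> ('t, 'x) word \<Rightarrow> ('t, 'x) word set" where
  "pcls act w = {v. pcong act w v}"

definition Pcar :: "('t::monoid_mult \<Rightarrow> 'x::bounded_semilattice_inf_top \<Rightarrow> 'x)
    \<Rightarrow> ('t, 'x) word set set" where
  "Pcar act = {pcls act w | w. w \<noteq> []}"

definition Pmul :: "('t::monoid_mult \<Rightarrow> 'x::bounded_semilattice_inf_top \<Rightarrow> 'x)
    \<Rightarrow> ('t, 'x) word set \<Rightarrow> ('t, 'x) word set \<Rightarrow> ('t, 'x) word set" where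
  "Pmul act A B = (\<Union>a\<in>A. \<Union>b\<in>B. pcls act (a @ b))"

definition Pone :: "('t::monoid_mult \<Rightarrow> 'x::bounded_semilattice_inf_top \<Rightarrow> 'x)
    \<Rightarrow> ('t, 'x) word set" where
  "Pone act = pcls act [Inl 1]"

definition Pplus :: "('t::monoid_mult \<Rightarrow> 'x::bounded_semilattice_inf_top \<Rightarrow> 'x)
    \<Rightarrow> ('t, 'x) word set \<Rightarrow> ('t, 'x) word set" where
  "Pplus act A = (\<Union>a\<in>A. pcls act [Inr (wplus act a)])"

definition PT :: "('t::monoid_mult \<Rightarrow> 'x::bounded_semilattice_inf_top \<Rightarrow> 'x)
    \<Rightarrow> 't \<Rightarrow> ('t, 'x) word set" where
  "PT act t = pcls act [Inl t]"

definition PX :: "('t::monoid_mult \<Rightarrow> 'x::bounded_semilattice_inf_top \<Rightarrow> 'x)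
    \<Rightarrow> 'x \<Rightarrow> ('t, 'x) word set" where
  "PX act e = pcls act [Inr e]"

text \<open>T-normal forms t_0 e_1 t_1 ... e_n t_n, represented by t_0 and the list
[(e_1,t_1),...,(e_n,t_n)].\<close>
definition nf_word :: "'t \<Rightarrow> ('x \<times> 't) list \<Rightarrow> ('t, 'x) word" where
  "nf_word t0 ps = Inl t0 # concat (map (\<lambda>(e, t). [Inr e, Inl t]) ps)"

definition is_Tnf :: "('t::monoid_mult \<Rightarrow> 'x::bounded_semilattice_inf_top \<Rightarrow> 'x)
    \<Rightarrow> 't \<Rightarrow> ('x \<times> 't) list \<Rightarrow> bool" where
  "is_Tnf act t0 ps \<longleftrightarrow>
     (\<forall>j < length ps. fst (ps ! j) \<noteq> top) \<and>
     (\<forall>j. Suc j < length ps \<longrightarrow> snd (ps ! j) \<noteq> 1) \<and>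
     (\<forall>j < length ps. fst (ps ! j) <
        wplus act (Inl (snd (ps ! j)) # concat (map (\<lambda>(e, t). [Inr e, Inl t]) (drop (Suc j) ps))))"

text \<open>a^* = e_n if n \<ge> 1 and t_n = 1 in the (unique) T-normal form of a; a^* = 1 otherwise.\<close>
definition Pstar :: "('t::monoid_mult \<Rightarrow> 'x::bounded_semilattice_inf_top \<Rightarrow> 'x)
    \<Rightarrow> ('t, 'x) word set \<Rightarrow> ('t, 'x) word set" where
  "Pstar act A =
     (if \<exists>t0 ps. is_Tnf act t0 ps \<and> pcls act (nf_word t0 ps) = A \<and> ps \<noteq> [] \<and> snd (last ps) = 1
      then PX act (fst (last (SOME ps. \<exists>t0. is_Tnf act t0 ps \<and> pcls act (nf_word t0 ps) = A
                                   \<and> ps \<noteq> [] \<and> snd (last ps) = 1)))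
      else Pone act)"

definition HP :: "('t::monoid_mult \<Rightarrow> 'x::bounded_semilattice_inf_top \<Rightarrow> 'x)
    \<Rightarrow> ('t, 'x) word set set" where
  "HP act = {Pmul act (PT act t) (PX act e) | t e. True}"

end

theory Submission
  imports Defs
begin

lemma pcong_ne: "pcong act u v \<Longrightarrow> u \<noteq> [] \<and> v \<noteq> []"
  by (induction rule: pcong.induct) auto

lemma pc_app_right: "pcong act u v \<Longrightarrow> pcong act (u @ w) (v @ w)"
  by (cases "w = []") (auto intro: pc_right)

lemma pc_app_left: "pcong act u v \<Longrightarrow> pcong act (w @ u) (w @ v)"
  by (cases "w = []") (auto intro: pc_left)

lemma pc_cons: "pcong act u v \<Longrightarrow> pcong act (x # u) (x # v)"
  using pc_app_left[of act u v "[x]"] by simp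

lemma pc_app2: "pcong act u v \<Longrightarrow> pcong act u' v' \<Longrightarrow> pcong act (u @ u') (v @ v')"
  by (meson pc_app_left pc_app_right pc_trans)

lemma wact_append: "wact act (u @ v) x = wact act u (wact act v x)"
  by (induction act u x rule: wact.induct) auto

definition W :: "('x \<times> 't) list \<Rightarrow> ('t, 'x) word" where
  "W ps = concat (map (\<lambda>(e, t). [Inr e, Inl t]) ps)"

lemma W_simps[simp]: "W [] = []" "W ((e,t)#ps) = Inr e # Inl t # W ps"
  by (auto simp: W_def)

lemma nf_word_W: "nf_word t0 ps = Inl t0 # W ps"
  by (simp add: nf_word_def W_def)

lemma is_Tnf_Nil[simp]: "is_Tnf act t0 []"
  by (simp add: is_Tnf_def)

lemma is_Tnf_Cons: "is_Tnf act t0 ((e,t)#ps) \<longleftrightarrow>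
   e \<noteq> top \<and> (ps \<noteq> [] \<longrightarrow> t \<noteq> 1) \<and> e < wplus act (nf_word t ps) \<and> is_Tnf act t ps"
proof -
  have A: "(\<forall>j<length ((e,t)#ps). P (((e,t)#ps)!j) (drop (Suc j) ((e,t)#ps))) \<longleftrightarrow>
     P (e,t) ps \<and> (\<forall>j<length ps. P (ps!j) (drop (Suc j) ps))" for P
    by (auto simp: less_Suc_eq_0_disj)
  have B: "(\<forall>j. Suc j < length ((e,t)#ps) \<longrightarrow> snd (((e,t)#ps)!j) \<noteq> 1) \<longleftrightarrow>
     (ps \<noteq> [] \<longrightarrow> t \<noteq> 1) \<and> (\<forall>j. Suc j < length ps \<longrightarrow> snd (ps!j) \<noteq> 1)"
    apply (cases ps) apply simp
    by (auto simp: nth_Cons split: nat.splits)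
  show ?thesis
    unfolding is_Tnf_def nf_word_def
    using A[of "\<lambda>p q. fst p \<noteq> top"]
      A[of "\<lambda>p q. fst p < wplus act (Inl (snd p) # concat (map (\<lambda>(e, t). [Inr e, Inl t]) q))"] B
    by auto
qed

lemma wplus_simps[simp]: "wplus act [] = top" "wplus act (Inl t # w) = act t (wplus act w)"
  "wplus act (Inr e # w) = inf e (wplus act w)"
  by (auto simp: wplus_def)

fun phi :: "('t::monoid_mult, 'x) word \<Rightarrow> 't" where
  "phi [] = 1"
| "phi (Inl t # w) = t * phi w"
| "phi (Inr e # w) = phi w"

lemma phi_append: "phi (u @ v) = phi u * phi v"
  by (induction u rule: phi.induct) (auto simp: mult.assoc)

lemma pcong_phi: "pcong act u v \<Longrightarrow> phi u = phi v"
  by (induction rule: pcong.induct) (auto simp: phi_append)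

definition nrm :: "('t::monoid_mult \<Rightarrow> 'x::bounded_semilattice_inf_top \<Rightarrow> 'x) \<Rightarrow> 't \<times> ('x \<times> 't) list \<Rightarrow> bool" where
  "nrm act N = is_Tnf act (fst N) (snd N)"

definition nw :: "'t \<times> ('x \<times> 't) list \<Rightarrow> ('t, 'x) word" where
  "nw N = nf_word (fst N) (snd N)"

lemma nw_simp[simp]: "nw (t0, ps) = Inl t0 # W ps"
  by (simp add: nw_def nf_word_W)

lemma nw_ne[simp]: "nw N \<noteq> []"
  by (cases N) simp

lemma is_Tnf_any: "is_Tnf act t0 ps \<Longrightarrow> is_Tnf act t ps"
  by (cases ps) (auto simp: is_Tnf_Cons)

lemma nrm_Cons: "nrm act (t0, (e,t)#ps) \<longleftrightarrow>
   e \<noteq> top \<and> (ps \<noteq> [] \<longrightarrow> t \<noteq> 1) \<and> e < wplus act (nw (t, ps)) \<and> nrm act (t, ps)"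
  by (simp add: nrm_def is_Tnf_Cons nf_word_W)

lemma nrm_Nil[simp]: "nrm act (t0, [])"
  by (simp add: nrm_def)

lemma nrm_any: "nrm act (t0, ps) \<Longrightarrow> nrm act (t, ps)"
  by (simp add: nrm_def is_Tnf_any)

locale opa =
  fixes act :: "'t::monoid_mult \<Rightarrow> 'x::bounded_semilattice_inf_top \<Rightarrow> 'x"
  assumes opa: "order_preserving_action act"
begin

lemma act1[simp]: "act 1 x = x"
  using opa by (simp add: order_preserving_action_def)

lemma act_mul: "act s (act t x) = act (s * t) x"
  using opa by (simp add: order_preserving_action_def)

lemma act_mono: "x \<le> y \<Longrightarrow> act t x \<le> act t y"
  using opa by (simp add: order_preserving_action_def)

lemma wact_mono: "x \<le> y \<Longrightarrow> wact act w x \<le> wact act w y"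
proof (induction w)
  case (Cons l w) then show ?case by (cases l) (auto intro: act_mono le_infI2)
qed simp

lemma pcong_wact: "pcong act u v \<Longrightarrow> wact act u = wact act v"
proof (induction rule: pcong.induct)
  case (pc_mergeT s t) then show ?case by (auto simp: act_mul)
next
  case (pc_mergeX e f) then show ?case by (auto simp: inf_assoc)
next
  case (pc_plus w)
  show ?case
  proof
    fix x
    have "wact act w x \<le> wact act w top" by (rule wact_mono) simp
    then show "wact act (Inr (wplus act w) # w) x = wact act w x"
      by (simp add: wplus_def inf_absorb2)
  qed
next
  case pc_one then show ?case by auto
next
  case (pc_left u v w) then show ?case by (auto simp: wact_append)
next
  case (pc_right u v w) then show ?case by (auto simp: wact_append)
qed auto

lemma pcong_wplus: "pcong act u v \<Longrightarrow> wplus act u = wplus act v"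
  by (simp add: wplus_def pcong_wact)

lemma pc_meet_plus: "w \<noteq> [] \<Longrightarrow> pcong act (Inr f # w) (Inr (inf f (wplus act w)) # w)"
proof -
  assume w: "w \<noteq> []"
  have "pcong act (Inr f # w) (Inr f # Inr (wplus act w) # w)"
    using pc_cons[OF pc_sym[OF pc_plus[OF w]]] by simp
  moreover have "pcong act ([Inr f, Inr (wplus act w)] @ w) ([Inr (inf f (wplus act w))] @ w)"
    by (rule pc_app_right) (rule pc_mergeX)
  ultimately show ?thesis by (auto intro: pc_trans)
qed

lemma pc_absorb: "w \<noteq> [] \<Longrightarrow> wplus act w \<le> e \<Longrightarrow> pcong act (Inr e # w) w"
  using pc_meet_plus[of w e] pc_plus[of w act] by (auto simp: inf_absorb2 intro: pc_trans)

lemma pc_top: "w \<noteq> [] \<Longrightarrow> pcong act (Inr top # w) w"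
  by (rule pc_absorb) auto

lemma pc_one_left: "w \<noteq> [] \<Longrightarrow> pcong act (Inl 1 # w) w"
  using pc_app_right[OF pc_one, of act w] pc_top[of w] by (auto intro: pc_trans)

lemma pc_one_right2: "pcong act [l, Inl 1] [l]"
proof (cases l)
  case (Inl s) then show ?thesis using pc_mergeT[of act s 1] by simp
next
  case (Inr f)
  have "pcong act [Inr f, Inl 1] [Inr f, Inr top]" using pc_cons[OF pc_one[of act], of "Inr f"] by simp
  moreover have "pcong act [Inr f, Inr top] [Inr f]" using pc_mergeX[of act f top] by simp
  ultimately show ?thesis using Inr by (auto intro: pc_trans)
qed

lemma pc_one_right: "w \<noteq> [] \<Longrightarrow> pcong act (w @ [Inl 1]) w"
proof -
  assume "w \<noteq> []"
  then obtain u l where w: "w = u @ [l]" by (metis append_butlast_last_id)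
  show ?thesis using pc_app_left[OF pc_one_right2[of l], of u] w by simp
qed

end

definition nplus :: "('t::monoid_mult \<Rightarrow> 'x::bounded_semilattice_inf_top \<Rightarrow> 'x) \<Rightarrow> 't \<times> ('x \<times> 't) list \<Rightarrow> 'x" where
  "nplus act N = wplus act (nw N)"

context opa begin

fun lact :: "('t + 'x) \<Rightarrow> 't \<times> ('x \<times> 't) list \<Rightarrow> 't \<times> ('x \<times> 't) list" where
  "lact (Inl s) (t0, ps) = (s * t0, ps)"
| "lact (Inr f) (t0, ps) = (let p = nplus act (t0, ps) in
     if inf f p = p then (t0, ps)
     else if t0 = 1 \<and> ps \<noteq> [] then (1, (inf f p, snd (hd ps)) # tl ps)
     else (1, (inf f p, t0) # ps))"

lemma nplus_1: "nrm act (1, (e,t)#ps) \<Longrightarrow> nplus act (1, (e,t)#ps) = e"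
  by (auto simp: nplus_def nrm_Cons inf_absorb1 less_imp_le)

lemma lact_nrm: "nrm act N \<Longrightarrow> nrm act (lact l N)"
proof (cases N)
  case (Pair t0 ps)
  assume n: "nrm act N"
  show ?thesis
  proof (cases l)
    case (Inl s) then show ?thesis using n Pair by (auto intro: nrm_any)
  next
    case (Inr f)
    define p where "p = nplus act (t0, ps)"
    show ?thesis
    proof (cases "inf f p = p")
      case True then show ?thesis using Inr Pair n by (simp add: p_def[symmetric] Let_def)
    next
      case False
      show ?thesis
      proof (cases "t0 = 1 \<and> ps \<noteq> []")
        case True
        then obtain e1 t1 ps' where ps: "ps = (e1,t1)#ps'" and t0: "t0 = 1"
          by (metis list.exhaust surj_pair)
        have pe: "p = e1" using nplus_1[of e1 t1 ps'] n Pair ps t0 p_def by simp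
        have lN: "lact l N = (1, (inf f e1, t1) # ps')"
          using Inr Pair False ps t0 pe unfolding p_def by (simp add: Let_def)
        have a: "ps' \<noteq> [] \<longrightarrow> t1 \<noteq> 1" "e1 < wplus act (nw (t1, ps'))" "nrm act (t1, ps')"
          using n Pair ps t0 by (simp_all only: nrm_Cons) blast+
        have h1: "inf f e1 < wplus act (nw (t1, ps'))" using a(2) by (meson inf_le2 le_less_trans)
        have h2: "inf f e1 \<noteq> top" by (metis h1 top.extremum_strict)
        show ?thesis unfolding lN nrm_Cons using a h1 h2 by blast
      next
        case False2: False
        have "lact l N = (1, (inf f p, t0) # ps)"
          using Inr Pair False False2 by (auto simp: p_def[symmetric] Let_def)
        moreover have "inf f p < p" using False by (simp add: inf.strict_order_iff inf_commute inf_left_commute)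
        moreover have "inf f p \<noteq> top" using \<open>inf f p < p\<close> top.extremum_strict 
          by (metis top.not_eq_extremum order.strict_trans2)
        ultimately show ?thesis using n Pair False2 by (auto simp: nrm_Cons p_def nplus_def intro: nrm_any)
      qed
    qed
  qed
qed

end

context opa begin

lemma pc_Inl1_Inr: "pcong act (Inl 1 # Inr x # w) (Inr x # w)"
  by (rule pc_one_left) simp

lemma lact_pc: "nrm act N \<Longrightarrow> pcong act (l # nw N) (nw (lact l N))"
proof (cases N)
  case (Pair t0 ps)
  assume n: "nrm act N"
  show ?thesis
  proof (cases l)
    case (Inl s)
    have "pcong act ([Inl s, Inl t0] @ W ps) ([Inl (s * t0)] @ W ps)"
      by (rule pc_app_right) (rule pc_mergeT)
    then show ?thesis using Inl Pair by simp
  next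
    case (Inr f)
    define p where "p = nplus act (t0, ps)"
    have m: "pcong act (Inr f # nw N) (Inr (inf f p) # nw N)"
      using pc_meet_plus[of "nw N" f] Pair by (simp add: p_def nplus_def)
    show ?thesis
    proof (cases "inf f p = p")
      case True
      then have "pcong act (Inr (inf f p) # nw N) (nw N)"
        using pc_plus[of "nw N" act] Pair by (simp add: p_def nplus_def)
      then show ?thesis using m True Inr Pair
        by (simp add: p_def[symmetric] Let_def) (metis pc_trans)
    next
      case False
      show ?thesis
      proof (cases "t0 = 1 \<and> ps \<noteq> []")
        case True
        then obtain e1 t1 ps' where ps: "ps = (e1,t1)#ps'" and t0: "t0 = 1"
          by (metis list.exhaust surj_pair)
        have pe: "p = e1" using nplus_1[of e1 t1 ps'] n Pair ps t0 p_def by simp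
        have lN: "lact l N = (1, (inf f e1, t1) # ps')"
          using Inr Pair False ps t0 pe unfolding p_def by (simp add: Let_def)
        have "pcong act (Inr (inf f p) # nw N) (Inr (inf f e1) # Inr e1 # Inl t1 # W ps')"
          using pc_cons[OF pc_Inl1_Inr[of e1 "Inl t1 # W ps'"], of "Inr (inf f p)"]
          Pair ps t0 pe by simp
        moreover have "pcong act ([Inr (inf f e1), Inr e1] @ Inl t1 # W ps') ([Inr (inf (inf f e1) e1)] @ Inl t1 # W ps')"
          by (rule pc_app_right) (rule pc_mergeX)
        moreover have "pcong act (Inr (inf f e1) # Inl t1 # W ps') (nw (lact l N))"
          using pc_sym[OF pc_Inl1_Inr[of "inf f e1" "Inl t1 # W ps'"]] lN by simp
        ultimately show ?thesis using m Inr
          by (simp add: inf_absorb1) (metis pc_trans)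
      next
        case False2: False
        have lN: "lact l N = (1, (inf f p, t0) # ps)"
          using Inr Pair False False2 by (auto simp: p_def[symmetric] Let_def)
        have "pcong act (Inr (inf f p) # nw N) (nw (lact l N))"
          using pc_sym[OF pc_Inl1_Inr[of "inf f p" "nw N"]] lN Pair by simp
        then show ?thesis using m Inr by (metis pc_trans)
      qed
    qed
  qed
qed

lemma nplus_lact: "nrm act N \<Longrightarrow> nplus act (lact l N) = wact act [l] (nplus act N)"
  using pcong_wplus[OF lact_pc[of N l]]
  by (cases l) (simp_all add: nplus_def wplus_def)

lemma lact_absorb: "nplus act N \<le> f \<Longrightarrow> lact (Inr f) N = N"
  by (cases N) (simp add: Let_def inf_absorb2)

lemma lact_top: "lact (Inr top) N = N"
  by (rule lact_absorb) simp

lemma lact_one: "lact (Inl 1) N = N"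
  by (cases N) simp

lemma lact_mergeT: "lact (Inl s) (lact (Inl t) N) = lact (Inl (s * t)) N"
  by (cases N) (simp add: mult.assoc)

end

context opa begin

lemma lact_merge: "nrm act N \<Longrightarrow> lact (Inr f) (lact (Inr g) N) = lact (Inr (inf f g)) N"
proof (cases N)
  case (Pair t0 ps)
  assume n: "nrm act N"
  define p where "p = nplus act (t0, ps)"
  show ?thesis
  proof (cases "inf g p = p")
    case True
    then have "inf (inf f g) p = inf f p" by (metis inf_assoc)
    then show ?thesis using True Pair by (simp add: p_def[symmetric] Let_def)
  next
    case False
    define N' where "N' = lact (Inr g) N"
    have pN': "nplus act N' = inf g p" using nplus_lact[OF n, of "Inr g"] Pair
      by (simp add: N'_def p_def)
    have ffg: "inf (inf f g) p = inf f (inf g p)" by (simp add: inf_assoc)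
    show ?thesis
    proof (cases "inf f (inf g p) = inf g p")
      case True
      have "lact (Inr f) N' = N'" using True pN' by (cases N') (simp add: Let_def)
      moreover have "inf (inf f g) p = inf g p" using ffg True by simp
      ultimately show ?thesis using False Pair unfolding N'_def
        by (simp add: p_def[symmetric] Let_def)
    next
      case False2: False
      have ne: "inf (inf f g) p \<noteq> p" using False2 ffg False
        by (metis inf.absorb_iff2 inf_le2 le_infE)
      show ?thesis
      proof (cases "t0 = 1 \<and> ps \<noteq> []")
        case True
        then obtain e1 t1 ps' where ps: "ps = (e1,t1)#ps'" and t0: "t0 = 1"
          by (metis list.exhaust surj_pair)
        have NN: "N' = (1, (inf g p, t1) # ps')"
          using False Pair ps t0 unfolding N'_def p_def by (simp add: Let_def)
        have "lact (Inr f) N' = (1, (inf f (inf g p), t1) # ps')"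
          using False2 pN' NN by (simp add: Let_def)
        moreover have "lact (Inr (inf f g)) N = (1, (inf f (inf g p), t1) # ps')"
          using ne ffg Pair ps t0 unfolding p_def by (simp add: Let_def)
        ultimately show ?thesis unfolding N'_def by simp
      next
        case F3: False
        have NN: "N' = (1, (inf g p, t0) # ps)"
          using False Pair F3 unfolding N'_def p_def by (auto simp: Let_def)
        have "lact (Inr f) N' = (1, (inf f (inf g p), t0) # ps)"
          using False2 pN' NN by (simp add: Let_def)
        moreover have "lact (Inr (inf f g)) N = (1, (inf f (inf g p), t0) # ps)"
          using ne ffg Pair F3 unfolding p_def by (auto simp: Let_def)
        ultimately show ?thesis unfolding N'_def by simp
      qed
    qed
  qed
qed

lemma foldr_nrm: "nrm act N \<Longrightarrow> nrm act (foldr lact w N)"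
  by (induction w) (auto intro: lact_nrm)

lemma foldr_nplus: "nrm act N \<Longrightarrow> nplus act (foldr lact w N) = wact act w (nplus act N)"
proof (induction w)
  case (Cons l w)
  then show ?case using nplus_lact[OF foldr_nrm[OF Cons.prems], of l w]
    by (cases l) auto
qed simp

lemma pcong_foldr: "pcong act u v \<Longrightarrow> nrm act N \<Longrightarrow> foldr lact u N = foldr lact v N"
proof (induction arbitrary: N rule: pcong.induct)
  case (pc_mergeT s t) then show ?case by (simp add: lact_mergeT)
next
  case (pc_mergeX e f) then show ?case by (simp add: lact_merge)
next
  case (pc_plus w)
  have "nplus act (foldr lact w N) \<le> wplus act w"
    using foldr_nplus[OF pc_plus.prems, of w] wact_mono[of "nplus act N" top w]
    by (simp add: wplus_def)
  then show ?case by (simp add: lact_absorb)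
next
  case pc_one then show ?case by (simp add: lact_one lact_top)
next
  case (pc_left u v w) then show ?case by simp
next
  case (pc_right u v w) then show ?case by (simp add: foldr_nrm)
qed auto

definition nfw :: "('t, 'x) word \<Rightarrow> 't \<times> ('x \<times> 't) list" where
  "nfw w = foldr lact w (1, [])"

lemma nfw_nrm: "nrm act (nfw w)"
  unfolding nfw_def by (rule foldr_nrm) simp

lemma nfw_pc: "w \<noteq> [] \<Longrightarrow> pcong act w (nw (nfw w))"
proof (induction w)
  case (Cons l w)
  show ?case
  proof (cases "w = []")
    case True
    have "pcong act [l] [l, Inl 1]" by (rule pc_sym) (rule pc_one_right2)
    moreover have "pcong act (l # nw (1, [])) (nw (lact l (1, [])))" by (rule lact_pc) simp
    ultimately show ?thesis using True by (simp add: nfw_def) (metis pc_trans)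
  next
    case False
    have "pcong act (l # w) (l # nw (nfw w))" using Cons False by (simp add: pc_cons)
    moreover have "pcong act (l # nw (nfw w)) (nw (lact l (nfw w)))" by (rule lact_pc) (rule nfw_nrm)
    ultimately show ?thesis by (simp add: nfw_def) (metis pc_trans)
  qed
qed simp

lemma nfw_nw: "nrm act N \<Longrightarrow> nfw (nw N) = N"
proof -
  have "nrm act (t0, ps) \<Longrightarrow> foldr lact (nw (t0, ps)) (1, []) = (t0, ps)" for t0 ps
  proof (induction ps arbitrary: t0)
    case Nil then show ?case by simp
  next
    case (Cons et ps)
    obtain e t where et: "et = (e, t)" by (cases et)
    have a: "e \<noteq> top" "ps \<noteq> [] \<longrightarrow> t \<noteq> 1" "e < nplus act (t, ps)" "nrm act (t, ps)"
      using Cons.prems et by (simp_all only: nrm_Cons nplus_def) blast+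
    have IH: "foldr lact (nw (t, ps)) (1, []) = (t, ps)" using Cons.IH a(4) by simp
    have "lact (Inr e) (t, ps) = (1, (e, t) # ps)"
      using a by (auto simp: Let_def inf_absorb1 less_imp_le)
    then show ?case using IH et by simp
  qed
  then show "nrm act N \<Longrightarrow> nfw (nw N) = N" by (cases N) (simp add: nfw_def)
qed

lemma nf_unique: "nrm act N \<Longrightarrow> nrm act M \<Longrightarrow> pcong act (nw N) (nw M) \<Longrightarrow> N = M"
  by (metis nfw_nw nfw_def pcong_foldr nrm_Nil)

end

lemma pc_refl': "w \<noteq> [] \<Longrightarrow> pcong act w w"
  by (rule pc_refl)

lemma pcls_eq: "pcong act u v \<Longrightarrow> pcls act u = pcls act v"
  unfolding pcls_def by (auto intro: pc_trans pc_sym)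

lemma pcls_mem: "w \<noteq> [] \<Longrightarrow> w \<in> pcls act w"
  unfolding pcls_def by (auto intro: pc_refl)

lemma pcls_eq_iff: "u \<noteq> [] \<Longrightarrow> pcls act u = pcls act v \<longleftrightarrow> pcong act u v"
  using pcls_mem[of u act] by (auto simp: pcls_eq) (auto simp: pcls_def intro: pc_sym)

lemma pcls_ne: "w \<noteq> [] \<Longrightarrow> pcls act w \<noteq> {}"
  using pcls_mem by blast

lemma pcls_memD: "x \<in> pcls act w \<Longrightarrow> pcong act w x"
  by (simp add: pcls_def)

lemma Pmul_pcls: "u \<noteq> [] \<Longrightarrow> v \<noteq> [] \<Longrightarrow> Pmul act (pcls act u) (pcls act v) = pcls act (u @ v)"
proof -
  assume u: "u \<noteq> []" and v: "v \<noteq> []"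
  have "pcls act (a @ b) = pcls act (u @ v)" if "a \<in> pcls act u" "b \<in> pcls act v" for a b
    using that by (auto dest!: pcls_memD intro!: pcls_eq pc_sym[OF pc_app2])
  then show ?thesis unfolding Pmul_def using pcls_mem[OF u, of act] pcls_mem[OF v, of act]
    by blast
qed

lemma Pcar_cases: "A \<in> Pcar act \<Longrightarrow> (\<And>w. w \<noteq> [] \<Longrightarrow> A = pcls act w \<Longrightarrow> P) \<Longrightarrow> P"
  unfolding Pcar_def by blast

lemma Pcar_I: "w \<noteq> [] \<Longrightarrow> pcls act w \<in> Pcar act"
  unfolding Pcar_def by blast

context opa begin

lemma Pplus_pcls: "w \<noteq> [] \<Longrightarrow> Pplus act (pcls act w) = PX act (wplus act w)"
proof -
  assume w: "w \<noteq> []"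
  have *: "a \<in> pcls act w \<Longrightarrow> wplus act a = wplus act w" for a
    by (auto dest!: pcls_memD dest: pcong_wplus)
  have "(\<Union>a\<in>pcls act w. pcls act [Inr (wplus act a)]) = (\<Union>a\<in>pcls act w. pcls act [Inr (wplus act w)])"
    by (rule SUP_cong) (rule refl, metis *)
  also have "\<dots> = pcls act [Inr (wplus act w)]" using pcls_mem[OF w, of act] by blast
  finally show ?thesis unfolding Pplus_def PX_def .
qed

lemma Pone_PX: "Pone act = PX act top"
  unfolding Pone_def PX_def by (rule pcls_eq) (rule pc_one)

lemma PX_mul: "Pmul act (PX act e) (PX act f) = PX act (inf e f)"
  unfolding PX_def by (simp add: Pmul_pcls pcls_eq[OF pc_mergeX])

lemma nfw_Inr: "nfw [Inr e] = (if e = top then (1, []) else (1, [(e, 1)]))"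
  by (simp add: nfw_def nplus_def Let_def)

lemma PX_inj: "PX act e = PX act f \<Longrightarrow> e = f"
proof -
  assume "PX act e = PX act f"
  then have "pcong act [Inr e] [Inr f]" unfolding PX_def by (subst (asm) pcls_eq_iff) auto
  then have "nfw [Inr e] = nfw [Inr f]" unfolding nfw_def by (rule pcong_foldr) simp
  then show ?thesis by (simp add: nfw_Inr split: if_splits)
qed

definition sf :: "'t \<times> ('x \<times> 't) list \<Rightarrow> ('t, 'x) word set" where
  "sf N = (if snd N \<noteq> [] \<and> snd (last (snd N)) = 1 then PX act (fst (last (snd N))) else Pone act)"

lemma pcls_nw_eq: "nrm act N \<Longrightarrow> nrm act M \<Longrightarrow> pcls act (nw N) = pcls act (nw M) \<Longrightarrow> N = M"
  by (simp add: pcls_eq_iff nf_unique)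

lemma Pstar_nf: "nrm act N \<Longrightarrow> Pstar act (pcls act (nw N)) = sf N"
proof -
  assume n: "nrm act N"
  obtain t0 ps where N: "N = (t0, ps)" by (cases N)
  have n2: "is_Tnf act t0 ps" using n N by (simp add: nrm_def)
  have uu: "ps1 = ps" if "is_Tnf act t1 ps1" "pcls act (nf_word t1 ps1) = pcls act (nf_word t0 ps)" for t1 ps1
  proof -
    have "(t1, ps1) = N" using pcls_nw_eq[of "(t1,ps1)" N] n N that unfolding nrm_def nw_def by (simp add: N)
    then show "ps1 = ps" using N by simp
  qed
  have e: "Pstar act (pcls act (nw N)) = Pstar act (pcls act (nf_word t0 ps))" by (simp add: nw_def N)
  show ?thesis
  proof (cases "ps \<noteq> [] \<and> snd (last ps) = 1")
    case True
    have "(SOME ps1. \<exists>t1. is_Tnf act t1 ps1 \<and> pcls act (nf_word t1 ps1) = pcls act (nf_word t0 ps) \<and> ps1 \<noteq> [] \<and> snd (last ps1) = 1) = ps"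
      apply (rule some_equality)
      using True n2 apply blast
      using uu by blast
    moreover have "Pstar act (pcls act (nf_word t0 ps)) = PX act (fst (last (SOME ps1. \<exists>t1. is_Tnf act t1 ps1 \<and> pcls act (nf_word t1 ps1) = pcls act (nf_word t0 ps) \<and> ps1 \<noteq> [] \<and> snd (last ps1) = 1)))"
      unfolding Pstar_def by (rule if_P) (use True n2 in blast)
    ultimately show ?thesis unfolding e using True by (simp add: N sf_def)
  next
    case False
    have "Pstar act (pcls act (nf_word t0 ps)) = Pone act"
      unfolding Pstar_def by (rule if_not_P) (use uu False in blast)
    then show ?thesis unfolding e using False by (auto simp: N sf_def)
  qed
qed

end

context opa begin

definition hmk :: "'t \<Rightarrow> 'x \<Rightarrow> ('t, 'x) word set" where
  "hmk t e = pcls act [Inl t, Inr e]"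

lemma HP_eq: "HP act = {hmk t e | t e. True}"
  unfolding HP_def hmk_def PT_def PX_def by (simp add: Pmul_pcls)

lemma hmk_Pcar: "hmk t e \<in> Pcar act"
  unfolding hmk_def by (rule Pcar_I) simp

lemma PX_Pcar: "PX act e \<in> Pcar act"
  unfolding PX_def by (rule Pcar_I) simp

lemma projs_eq: "projs (Pcar act) (Pplus act) = range (PX act)"
proof
  show "projs (Pcar act) (Pplus act) \<subseteq> range (PX act)"
    unfolding projs_def by (auto elim!: Pcar_cases simp: Pplus_pcls)
  show "range (PX act) \<subseteq> projs (Pcar act) (Pplus act)"
  proof
    fix A assume "A \<in> range (PX act)"
    then obtain e where A: "A = PX act e" by blast
    have "Pplus act (PX act e) = PX act e" by (simp add: PX_def Pplus_pcls)
    then show "A \<in> projs (Pcar act) (Pplus act)" unfolding projs_def using A PX_Pcar by (metis image_eqI)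
  qed
qed

lemma PX_hmk: "PX act e = hmk 1 e"
  unfolding PX_def hmk_def by (rule pcls_eq) (rule pc_sym, rule pc_one_left, simp)

lemma PT_hmk: "PT act t = hmk t top"
proof -
  have "pcong act [Inl t, Inr top] [Inl t, Inl 1]" using pc_cons[OF pc_sym[OF pc_one[of act]], of "Inl t"] by simp
  moreover have "pcong act [Inl t, Inl 1] [Inl t]" by (rule pc_one_right2)
  ultimately show ?thesis unfolding PT_def hmk_def by (metis pc_trans pcls_eq)
qed

lemma Pone_hmk: "Pone act = hmk 1 top"
  using PT_hmk Pone_def PT_def by metis

lemma phi_hmk: "w \<in> hmk t e \<Longrightarrow> phi w = t"
  unfolding hmk_def by (auto dest!: pcls_memD pcong_phi)

lemma hmk_proj_iff: "hmk t e \<in> range (PX act) \<longleftrightarrow> t = 1"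
proof
  assume "hmk t e \<in> range (PX act)"
  then obtain f where "hmk t e = hmk 1 f" by (auto simp: PX_hmk)
  then show "t = 1" using phi_hmk[of "[Inl t, Inr e]" t e] phi_hmk[of "[Inl t, Inr e]" 1 f]
    pcls_mem[of "[Inl t, Inr e]" act] by (simp add: hmk_def)
next
  assume "t = 1" then show "hmk t e \<in> range (PX act)" by (simp add: PX_hmk)
qed

lemma hmk_mul_PX: "Pmul act (hmk t e) (PX act f) = hmk t (inf e f)"
proof -
  have "pcong act ([Inl t] @ [Inr e, Inr f]) ([Inl t] @ [Inr (inf e f)])"
    by (rule pc_app_left) (rule pc_mergeX)
  then show ?thesis unfolding hmk_def PX_def by (simp add: Pmul_pcls pcls_eq)
qed

lemma Pplus_hmk: "Pplus act (hmk t e) = PX act (act t e)"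
  unfolding hmk_def by (simp add: Pplus_pcls)

lemma PT_mul_PX: "Pmul act (PT act t) (PX act e) = hmk t e"
  unfolding PT_def PX_def hmk_def by (simp add: Pmul_pcls)

end

fun tnf_of :: "('t::monoid_mult \<times> 'x) list \<Rightarrow> 't \<times> ('x::bounded_semilattice_inf_top \<times> 't) list" where
  "tnf_of [] = (1, [])"
| "tnf_of [(t, e)] = (if e = top then (t, []) else (t, [(e, 1)]))"
| "tnf_of ((t, e) # c # cs) = (case tnf_of (c # cs) of (t', ps) \<Rightarrow> (t, (e, t') # ps))"

definition cw :: "('t \<times> 'x) list \<Rightarrow> ('t, 'x) word" where
  "cw cs = concat (map (\<lambda>(t, e). [Inl t, Inr e]) cs)"

lemma cw_simps[simp]: "cw [] = []" "cw ((t,e) # cs) = Inl t # Inr e # cw cs"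
  by (auto simp: cw_def)

lemma tnf_fst: "cs \<noteq> [] \<Longrightarrow> fst (tnf_of cs) = fst (hd cs)"
  by (induction cs rule: tnf_of.induct) (auto split: prod.splits)

lemma tnf_of_Cons2: "tnf_of ((t, e) # c # cs) = (t, (e, fst c) # snd (tnf_of (c # cs)))"
  using tnf_fst[of "c # cs"] by (cases "tnf_of (c # cs)") simp

declare tnf_of.simps(3)[simp del]

context opa begin

fun ccs :: "('t \<times> 'x) list \<Rightarrow> bool" where
  "ccs [] = False"
| "ccs [c] = True"
| "ccs ((t, e) # (t', e') # cs) = (e < act t' e' \<and> t' \<noteq> 1 \<and> ccs ((t', e') # cs))"

lemma ccs_ne: "ccs cs \<Longrightarrow> cs \<noteq> []"
  by (cases cs) auto

lemma cw_pc: "cs \<noteq> [] \<Longrightarrow> pcong act (cw cs) (nw (tnf_of cs))"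
proof (induction cs rule: tnf_of.induct)
  case (2 t e)
  show ?case
  proof (cases "e = top")
    case True
    have "pcong act [Inl t, Inr top] [Inl t, Inl 1]" using pc_cons[OF pc_sym[OF pc_one[of act]], of "Inl t"] by simp
    moreover have "pcong act [Inl t, Inl 1] [Inl t]" by (rule pc_one_right2)
    ultimately show ?thesis using True by (simp) (metis pc_trans)
  next
    case False
    have "pcong act ([Inl t, Inr e]) ([Inl t, Inr e] @ [Inl 1])" by (rule pc_sym, rule pc_one_right) simp
    then show ?thesis using False by simp
  qed
next
  case (3 t e c cs)
  obtain t' e' where c: "c = (t', e')" by (cases c)
  have "pcong act ([Inl t, Inr e] @ cw (c # cs)) ([Inl t, Inr e] @ nw (tnf_of (c # cs)))"
    using 3 by (intro pc_app_left) auto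
  moreover have "nw (tnf_of (c # cs)) = Inl t' # W (snd (tnf_of (c # cs)))"
    using tnf_fst[of "c # cs"] c by (cases "tnf_of (c # cs)") simp
  ultimately show ?case using c by (simp add: tnf_of_Cons2)
qed simp

lemma ccs_wplus: "ccs cs \<Longrightarrow> wplus act (cw cs) = act (fst (hd cs)) (snd (hd cs))"
proof (induction cs rule: ccs.induct)
  case (2 c) then show ?case by (cases c) simp
next
  case (3 t e t' e' cs)
  then show ?case by (simp add: inf_absorb1 less_imp_le)
qed simp

lemma ccs_nplus: "ccs cs \<Longrightarrow> nplus act (tnf_of cs) = act (fst (hd cs)) (snd (hd cs))"
  using ccs_wplus[of cs] pcong_wplus[OF cw_pc[OF ccs_ne]] by (simp add: nplus_def)

lemma ccs_nrm: "ccs cs \<Longrightarrow> nrm act (tnf_of cs)"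
proof (induction cs rule: ccs.induct)
  case (2 c)
  obtain t e where c: "c = (t, e)" by (cases c)
  show ?case using c by (auto simp: nrm_Cons less_le)
next
  case (3 t e t' e' cs)
  have a: "e < act t' e'" "t' \<noteq> 1" "ccs ((t', e') # cs)" using 3 by auto
  have n: "nrm act (t', snd (tnf_of ((t', e') # cs)))"
    using 3(1) a(3) tnf_fst[of "(t', e') # cs"] by (cases "tnf_of ((t', e') # cs)") simp
  have p: "wplus act (nw (t', snd (tnf_of ((t', e') # cs)))) = act t' e'"
    using ccs_nplus[OF a(3)] tnf_fst[of "(t', e') # cs"]
    by (cases "tnf_of ((t', e') # cs)") (simp add: nplus_def)
  have "e \<noteq> top" using a(1) by (metis top.extremum_strict)
  then show ?case using a n p by (simp add: tnf_of_Cons2 nrm_Cons)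
qed simp

lemma tnf_len: "length (snd (tnf_of cs)) + 1 \<ge> length cs"
  by (induction cs rule: tnf_of.induct) (auto simp: tnf_of_Cons2)

lemma tnf_inj: "ccs cs \<Longrightarrow> ccs cs' \<Longrightarrow> tnf_of cs = tnf_of cs' \<Longrightarrow> cs = cs'"
proof (induction cs arbitrary: cs' rule: ccs.induct)
  case 1 then show ?case by simp
next
  case (2 c)
  obtain t e where c: "c = (t, e)" by (cases c)
  show ?case
  proof (cases cs' rule: ccs.cases)
    case 1 then show ?thesis using 2 by simp
  next
    case (2 c')
    then show ?thesis using "2.prems" c by (cases c') (auto split: if_splits)
  next
    case (3 t1 e1 t2 e2 cs2)
    have l: "length (snd (tnf_of ((t2, e2) # cs2))) + 1 \<ge> length ((t2, e2) # cs2)" by (rule tnf_len)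
    have "t2 \<noteq> 1" using "2.prems" 3 by simp
    then show ?thesis using "2.prems" 3 c l by (auto simp: tnf_of_Cons2 split: if_splits)
  qed
next
  case (3 t e t' e' cs)
  show ?case
  proof (cases cs' rule: ccs.cases)
    case 1 then show ?thesis using 3 by simp
  next
    case (2 c')
    have l: "length (snd (tnf_of ((t', e') # cs))) + 1 \<ge> length ((t', e') # cs)" by (rule tnf_len)
    have "t' \<noteq> 1" using "3.prems" by simp
    then show ?thesis using "3.prems" 2 l by (cases c') (auto simp: tnf_of_Cons2 split: if_splits)
  next
    case (3 t1 e1 t2 e2 cs2)
    have "tnf_of ((t', e') # cs) = tnf_of ((t2, e2) # cs2)"
      using "3.prems" 3 tnf_fst[of "(t', e') # cs"] tnf_fst[of "(t2, e2) # cs2"]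
      by (auto simp: tnf_of_Cons2 prod_eq_iff)
    then have "(t', e') # cs = (t2, e2) # cs2" using "3.IH" "3.prems" 3 by auto
    then show ?thesis using "3.prems" 3 by (simp add: tnf_of_Cons2)
  qed
qed

lemma tnf_surj: "nrm act (t0, ps) \<Longrightarrow> \<exists>cs. ccs cs \<and> tnf_of cs = (t0, ps)"
proof (induction ps arbitrary: t0)
  case Nil
  then show ?case by (intro exI[of _ "[(t0, top)]"]) simp
next
  case (Cons et ps)
  obtain e t where et: "et = (e, t)" by (cases et)
  have a: "e \<noteq> top" "ps \<noteq> [] \<longrightarrow> t \<noteq> 1" "e < wplus act (nw (t, ps))" "nrm act (t, ps)"
    using Cons.prems et by (simp_all only: nrm_Cons) blast+
  obtain cs where cs: "ccs cs" "tnf_of cs = (t, ps)" using Cons.IH a(4) by blast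
  show ?case
  proof (cases "ps = [] \<and> t = 1")
    case True
    then show ?thesis using et a by (intro exI[of _ "[(t0, e)]"]) simp
  next
    case False
    then have t1: "t \<noteq> 1" using a(2) by blast
    obtain c cs' where c: "cs = c # cs'" using ccs_ne[OF cs(1)] by (cases cs) auto
    have ft: "fst c = t" using tnf_fst[of cs] cs c by simp
    have "nplus act (tnf_of cs) = act (fst c) (snd c)" using ccs_nplus[OF cs(1)] c by simp
    then have lt: "e < act (fst c) (snd c)" using a(3) cs(2) by (simp add: nplus_def)
    have "ccs ((t0, e) # cs)" using cs(1) c lt ft t1 by (cases c) simp
    moreover have "tnf_of ((t0, e) # cs) = (t0, (e, t) # ps)" using c cs(2) ft by (simp add: tnf_of_Cons2)
    ultimately show ?thesis using et by blast
  qed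
qed

lemma tnf_sf: "ccs cs \<Longrightarrow> sf (tnf_of cs) = PX act (snd (last cs))"
proof (induction cs rule: ccs.induct)
  case (2 c)
  obtain t e where c: "c = (t, e)" by (cases c)
  show ?case using c by (simp add: sf_def Pone_PX)
next
  case (3 t e t' e' cs)
  have l: "length (snd (tnf_of ((t', e') # cs))) + 1 \<ge> length ((t', e') # cs)" by (rule tnf_len)
  show ?case
  proof (cases "snd (tnf_of ((t', e') # cs)) = []")
    case True
    then have cs: "cs = []" using l by simp
    then have "e' = top" using True by (simp split: if_splits)
    then show ?thesis using True cs 3 by (simp add: tnf_of_Cons2 sf_def Pone_PX)
  next
    case False
    have "sf (tnf_of ((t, e) # (t', e') # cs)) = sf (tnf_of ((t', e') # cs))"
      using False by (simp add: tnf_of_Cons2 sf_def)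
    also have "\<dots> = PX act (snd (last ((t', e') # cs)))" using 3 by simp
    finally show ?thesis by simp
  qed
qed simp

lemma Pstar_cw: "ccs cs \<Longrightarrow> Pstar act (pcls act (cw cs)) = PX act (snd (last cs))"
  using Pstar_nf[OF ccs_nrm] tnf_sf pcls_eq[OF cw_pc[OF ccs_ne]] by metis

lemma Pplus_cw: "ccs cs \<Longrightarrow> Pplus act (pcls act (cw cs)) = PX act (act (fst (hd cs)) (snd (hd cs)))"
  using Pplus_pcls[of "cw cs"] ccs_wplus ccs_ne by (cases cs) auto

lemma Pstar_hmk: "Pstar act (hmk t e) = PX act e"
  using Pstar_cw[of "[(t, e)]"] by (simp add: hmk_def)

end

lemma canonical_single: "canonical C mul pl st H [h] \<longleftrightarrow> h \<in> H"
  by (simp add: canonical_def)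

lemma canonical_cons2: "canonical C mul pl st H (h # h' # hs) \<longleftrightarrow>
   h \<in> H \<and> plt mul (st h) (pl h') \<and> h' \<notin> projs C pl \<and> canonical C mul pl st H (h' # hs)"
proof -
  have A: "(\<forall>i. Suc i < length (h # h' # hs) \<longrightarrow> P i) \<longleftrightarrow> P 0 \<and> (\<forall>i. Suc i < length (h' # hs) \<longrightarrow> P (Suc i))" for P
    apply auto apply (case_tac i) by auto
  have B: "(\<forall>i. 0 < i \<and> i < length (h # h' # hs) \<longrightarrow> Q ((h # h' # hs) ! i)) \<longleftrightarrow>
     Q h' \<and> (\<forall>i. 0 < i \<and> i < length (h' # hs) \<longrightarrow> Q ((h' # hs) ! i))" for Q
    apply auto apply (case_tac i) apply auto apply (case_tac nat) by auto
  show ?thesis unfolding canonical_def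
    using A[of "\<lambda>i. plt mul (st ((h # h' # hs) ! i)) (pl ((h # h' # hs) ! Suc i))"]
      B[of "\<lambda>x. x \<notin> projs C pl"] by auto
qed

context opa begin

definition hmc :: "'t \<times> 'x \<Rightarrow> ('t, 'x) word set" where
  "hmc c = hmk (fst c) (snd c)"

lemma lprod_hmc: "cs \<noteq> [] \<Longrightarrow> lprod (Pmul act) (map hmc cs) = pcls act (cw cs)"
proof (induction cs)
  case (Cons c cs)
  obtain t e where c: "c = (t, e)" by (cases c)
  show ?case
  proof (cases "cs = []")
    case True then show ?thesis using c by (simp add: hmc_def hmk_def)
  next
    case False
    then obtain c' cs' where cs: "cs = c' # cs'" by (cases cs) auto
    have "cw cs \<noteq> []" using cs by (cases c') simp
    then show ?thesis using Cons False c cs by (simp add: hmc_def hmk_def Pmul_pcls)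
  qed
qed simp

lemma HP_list: "set hs \<subseteq> HP act \<Longrightarrow> \<exists>cs. hs = map hmc cs"
proof (induction hs)
  case (Cons h hs)
  then obtain cs where cs: "hs = map hmc cs" by auto
  obtain t e where "h = hmk t e" using Cons.prems by (auto simp: HP_eq)
  then have "h # hs = map hmc ((t, e) # cs)" using cs by (simp add: hmc_def)
  then show ?case by (rule exI)
qed simp

lemma ple_PX: "ple (Pmul act) (PX act a) (PX act b) \<longleftrightarrow> a \<le> b"
  unfolding ple_def PX_mul using PX_inj by (metis inf.absorb_iff1)

lemma plt_PX: "plt (Pmul act) (PX act a) (PX act b) \<longleftrightarrow> a < b"
  unfolding plt_def ple_PX using PX_inj by (auto simp: less_le)

lemma canon_iff: "canonical (Pcar act) (Pmul act) (Pplus act) (Pstar act) (HP act) (map hmc cs) \<longleftrightarrow> ccs cs"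
proof (induction cs rule: ccs.induct)
  case 1 then show ?case by (simp add: canonical_def)
next
  case (2 c) then show ?case by (auto simp: canonical_single HP_eq hmc_def)
next
  case (3 t e t' e' cs)
  have m: "map hmc ((t, e) # (t', e') # cs) = hmk t e # hmk t' e' # map hmc cs"
    "map hmc ((t', e') # cs) = hmk t' e' # map hmc cs" by (simp_all add: hmc_def)
  have h: "hmk t e \<in> HP act" by (auto simp: HP_eq)
  have p: "plt (Pmul act) (Pstar act (hmk t e)) (Pplus act (hmk t' e')) \<longleftrightarrow> e < act t' e'"
    by (simp add: Pstar_hmk Pplus_hmk plt_PX)
  have q: "hmk t' e' \<notin> projs (Pcar act) (Pplus act) \<longleftrightarrow> t' \<noteq> 1"
    by (simp add: projs_eq hmk_proj_iff)
  show ?case unfolding m canonical_cons2 using h p q 3 m(2) by simp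
qed

lemma mem_phi: "u \<in> pcls act w \<Longrightarrow> phi u = phi w"
  by (auto dest!: pcls_memD pcong_phi)

lemma sigma_phi: "sigma (Pcar act) (Pmul act) (Pplus act) a b \<Longrightarrow>
  \<exists>wa wb. wa \<noteq> [] \<and> wb \<noteq> [] \<and> a = pcls act wa \<and> b = pcls act wb \<and> phi wa = phi wb"
proof (induction rule: sigma.induct)
  case (sig_base e f)
  then obtain x y where "e = pcls act [Inr x]" "f = pcls act [Inr y]" by (auto simp: projs_eq PX_def)
  then show ?case by (intro exI[of _ "[Inr x]"] exI[of _ "[Inr y]"]) simp
next
  case (sig_refl a) then show ?case by (auto elim!: Pcar_cases)
next
  case (sig_sym a b) then show ?case by metis
next
  case (sig_trans a b c)
  then obtain wa wb wb' wc where "wa \<noteq> []" "wc \<noteq> []" "wb' \<noteq> []" "a = pcls act wa" "b = pcls act wb" "b = pcls act wb'"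
    "c = pcls act wc" "phi wa = phi wb" "phi wb' = phi wc" by metis
  then have "wb' \<in> pcls act wb" using pcls_mem[of wb' act] \<open>b = pcls act wb\<close> \<open>b = pcls act wb'\<close> \<open>wb' \<noteq> []\<close> by simp
  then have "phi wb' = phi wb" by (rule mem_phi)
  then show ?case using \<open>wa \<noteq> []\<close> \<open>wc \<noteq> []\<close> \<open>a = pcls act wa\<close> \<open>c = pcls act wc\<close> \<open>phi wa = phi wb\<close> \<open>phi wb' = phi wc\<close>
    by metis
next
  case (sig_left a b c)
  then obtain wa wb wc where w: "wa \<noteq> []" "wb \<noteq> []" "wc \<noteq> []" "a = pcls act wa" "b = pcls act wb"
    "c = pcls act wc" "phi wa = phi wb" by (metis Pcar_cases)
  then show ?case by (intro exI[of _ "wc @ wa"] exI[of _ "wc @ wb"]) (simp add: Pmul_pcls phi_append)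
next
  case (sig_right a b c)
  then obtain wa wb wc where w: "wa \<noteq> []" "wb \<noteq> []" "wc \<noteq> []" "a = pcls act wa" "b = pcls act wb"
    "c = pcls act wc" "phi wa = phi wb" by (metis Pcar_cases)
  then show ?case by (intro exI[of _ "wa @ wc"] exI[of _ "wb @ wc"]) (simp add: Pmul_pcls phi_append)
qed

lemma sigma_hmk: "sigma (Pcar act) (Pmul act) (Pplus act) (hmk t e) (hmk s f) \<Longrightarrow> t = s"
proof -
  assume "sigma (Pcar act) (Pmul act) (Pplus act) (hmk t e) (hmk s f)"
  then obtain wa wb where w: "wa \<noteq> []" "wb \<noteq> []" "hmk t e = pcls act wa" "hmk s f = pcls act wb" "phi wa = phi wb"
    using sigma_phi by metis
  have "phi wa = t" using phi_hmk[of wa t e] pcls_mem[OF w(1), of act] w(3) by simp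
  moreover have "phi wb = s" using phi_hmk[of wb s f] pcls_mem[OF w(2), of act] w(4) by simp
  ultimately show ?thesis using w(5) by simp
qed

lemma sigma_PT1: "sigma (Pcar act) (Pmul act) (Pplus act) (pcls act [l]) (PT act (phi [l]))"
proof (cases l)
  case (Inl t) then show ?thesis by (simp add: PT_def sig_refl Pcar_I)
next
  case (Inr e)
  have "PT act 1 = PX act top" using Pone_PX by (simp add: Pone_def PT_def)
  then show ?thesis using Inr by (simp add: projs_eq PX_def[symmetric] sig_base)
qed

lemma sigma_PT: "w \<noteq> [] \<Longrightarrow> sigma (Pcar act) (Pmul act) (Pplus act) (pcls act w) (PT act (phi w))"
proof (induction w)
  case (Cons l w)
  show ?case
  proof (cases "w = []")
    case True then show ?thesis using sigma_PT1 by simp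
  next
    case False
    have e1: "pcls act (l # w) = Pmul act (pcls act [l]) (pcls act w)" using False by (simp add: Pmul_pcls)
    have s1: "sigma (Pcar act) (Pmul act) (Pplus act) (Pmul act (pcls act [l]) (pcls act w)) (Pmul act (pcls act [l]) (PT act (phi w)))"
      using Cons False by (simp add: sig_left Pcar_I)
    have s2: "sigma (Pcar act) (Pmul act) (Pplus act) (Pmul act (pcls act [l]) (PT act (phi w))) (Pmul act (PT act (phi [l])) (PT act (phi w)))"
      using sigma_PT1 by (simp add: sig_right Pcar_I PT_def)
    have "Pmul act (PT act (phi [l])) (PT act (phi w)) = PT act (phi (l # w))"
      using phi_append[of "[l]" w] by (simp add: PT_def Pmul_pcls pcls_eq[OF pc_mergeT])
    then show ?thesis using e1 s1 s2 by (metis sig_trans)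
  qed
qed simp

lemma sigma_hmk_PT: "sigma (Pcar act) (Pmul act) (Pplus act) (hmk t e) (PT act t)"
  using sigma_PT[of "[Inl t, Inr e]"] by (simp add: hmk_def)

end

context opa begin

abbreviation "CC \<equiv> Pcar act"
abbreviation "MM \<equiv> Pmul act"
abbreviation "PL \<equiv> Pplus act"
abbreviation "ST \<equiv> Pstar act"

lemma HP_sub: "HP act \<subseteq> CC"
  by (auto simp: HP_eq hmk_Pcar)

lemma H1: "projs CC PL \<subseteq> HP act"
  by (auto simp: projs_eq HP_eq PX_hmk)

lemma H2: "\<forall>h\<in>HP act. \<forall>e\<in>projs CC PL. MM h e \<in> HP act \<and> ST (MM h e) = MM (ST h) e"
proof (intro ballI)
  fix h e' assume h: "h \<in> HP act" and e: "e' \<in> projs CC PL"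
  obtain t e where ht: "h = hmk t e" using h by (auto simp: HP_eq)
  obtain f where ef: "e' = PX act f" using e by (auto simp: projs_eq)
  have "MM h e' = hmk t (inf e f)" by (simp add: ht ef hmk_mul_PX)
  then show "MM h e' \<in> HP act \<and> ST (MM h e') = MM (ST h) e'"
    by (auto simp: HP_eq Pstar_hmk PX_mul ht ef)
qed

lemma H3: "\<forall>h\<in>HP act. \<forall>k\<in>HP act - projs CC PL. ple MM (PL k) (ST h) \<longrightarrow>
        MM h k \<in> HP act \<and> ST (MM h k) = ST k"
proof (intro ballI impI)
  fix h k assume h: "h \<in> HP act" and k: "k \<in> HP act - projs CC PL" and le: "ple MM (PL k) (ST h)"
  obtain t e where ht: "h = hmk t e" using h by (auto simp: HP_eq)
  obtain s f where ks: "k = hmk s f" using k by (auto simp: HP_eq)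
  have le2: "act s f \<le> e" using le by (simp add: ht ks Pplus_hmk Pstar_hmk ple_PX)
  have "pcong act (Inr e # [Inl s, Inr f]) [Inl s, Inr f]" by (rule pc_absorb) (use le2 in simp_all)
  then have "pcong act ([Inl t] @ [Inr e, Inl s, Inr f]) ([Inl t] @ [Inl s, Inr f])" by (rule pc_app_left)
  moreover have "pcong act ([Inl t, Inl s] @ [Inr f]) ([Inl (t * s)] @ [Inr f])" by (rule pc_app_right) (rule pc_mergeT)
  ultimately have "pcong act [Inl t, Inr e, Inl s, Inr f] [Inl (t * s), Inr f]"
    using pc_trans by fastforce
  then have "pcls act [Inl t, Inr e, Inl s, Inr f] = pcls act [Inl (t * s), Inr f]" by (rule pcls_eq)
  moreover have "MM h k = pcls act [Inl t, Inr e, Inl s, Inr f]" using Pmul_pcls[of "[Inl t, Inr e]" "[Inl s, Inr f]"]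
    by (simp add: ht ks hmk_def)
  ultimately have "MM h k = hmk (t * s) f" by (simp add: hmk_def)
  then show "MM h k \<in> HP act \<and> ST (MM h k) = ST k" by (auto simp: HP_eq Pstar_hmk ks)
qed

lemma H4: "\<forall>m\<in>CC. \<exists>h\<in>HP act. sigma CC MM PL m h"
proof
  fix m assume "m \<in> CC"
  then obtain w where w: "w \<noteq> []" "m = pcls act w" by (auto elim: Pcar_cases)
  then show "\<exists>h\<in>HP act. sigma CC MM PL m h" using sigma_PT[OF w(1)]
    by (auto simp: HP_eq PT_hmk)
qed

lemma H5: "\<forall>h\<in>HP act. \<forall>k\<in>HP act. \<forall>w\<in>HP act. sigma CC MM PL (MM h k) w \<and> ST k = ST w \<longrightarrow>
        (\<exists>u\<in>HP act. sigma CC MM PL u h \<and> ple MM (PL k) (ST u))"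
proof (intro ballI impI)
  fix h k w assume h: "h \<in> HP act" and k: "k \<in> HP act"
  obtain t e where ht: "h = hmk t e" using h by (auto simp: HP_eq)
  obtain s f where ks: "k = hmk s f" using k by (auto simp: HP_eq)
  let ?u = "hmk t (act s f)"
  have "sigma CC MM PL ?u h"
    using sigma_hmk_PT[of t "act s f"] sigma_hmk_PT[of t e] ht by (metis sig_sym sig_trans)
  moreover have "ple MM (PL k) (ST ?u)" by (simp add: ks Pplus_hmk Pstar_hmk ple_PX)
  moreover have "?u \<in> HP act" by (auto simp: HP_eq)
  ultimately show "\<exists>u\<in>HP act. sigma CC MM PL u h \<and> ple MM (PL k) (ST u)" by blast
qed

lemma atomic_HP: "atomic CC MM PL ST (HP act)"
  unfolding atomic_def using HP_sub H1 H2 H3 H4 H5 by blast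

lemma gen_HP: "generates CC MM (Pone act) (HP act)"
proof -
  have "w \<noteq> [] \<Longrightarrow> pcls act w \<in> mgen MM (Pone act) (HP act)" for w
  proof (induction w)
    case (Cons l w)
    have l: "pcls act [l] \<in> HP act"
    proof (cases l)
      case (Inl t) then show ?thesis using PT_hmk[of t] by (auto simp: HP_eq PT_def)
    next
      case (Inr e) then show ?thesis using PX_hmk[of e] by (auto simp: HP_eq PX_def)
    qed
    show ?case
    proof (cases "w = []")
      case True then show ?thesis using l by (simp add: mgen_gen)
    next
      case False
      then have "pcls act (l # w) = MM (pcls act [l]) (pcls act w)" by (simp add: Pmul_pcls)
      then show ?thesis using Cons False l by (metis mgen_gen mgen_mul)
    qed
  qed simp
  then show ?thesis unfolding generates_def by (auto elim: Pcar_cases)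
qed

lemma canon_HP: "canonical CC MM PL ST (HP act) hs \<Longrightarrow> \<exists>cs. hs = map hmc cs \<and> ccs cs"
  using HP_list[of hs] canon_iff by (metis canonical_def)

lemma exists_canon: "a \<in> CC \<Longrightarrow> \<exists>cs. ccs cs \<and> a = pcls act (cw cs)"
proof -
  assume "a \<in> CC"
  then obtain w where w: "w \<noteq> []" "a = pcls act w" by (auto elim: Pcar_cases)
  have a: "a = pcls act (nw (nfw w))" using w nfw_pc pcls_eq by metis
  obtain t0 ps where N: "nfw w = (t0, ps)" by (cases "nfw w")
  obtain cs where cs: "ccs cs" "tnf_of cs = (t0, ps)" using tnf_surj nfw_nrm N by metis
  have "a = pcls act (cw cs)" using a N cs pcls_eq[OF cw_pc[OF ccs_ne[OF cs(1)]]] by simp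
  then show ?thesis using cs by blast
qed

lemma cw_unique: "ccs cs \<Longrightarrow> ccs cs' \<Longrightarrow> pcls act (cw cs) = pcls act (cw cs') \<Longrightarrow> cs = cs'"
  using pcls_eq[OF cw_pc[OF ccs_ne]] pcls_nw_eq ccs_nrm tnf_inj by metis

lemma hcf: "has_canonical_forms CC MM PL ST (HP act)"
  unfolding has_canonical_forms_def
proof
  fix a assume "a \<in> CC"
  then obtain cs where cs: "ccs cs" "a = pcls act (cw cs)" using exists_canon by blast
  show "\<exists>!hs. canonical CC MM PL ST (HP act) hs \<and> lprod MM hs = a"
  proof (rule ex1I[of _ "map hmc cs"])
    show "canonical CC MM PL ST (HP act) (map hmc cs) \<and> lprod MM (map hmc cs) = a"
      using cs canon_iff lprod_hmc ccs_ne by simp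
  next
    fix hs assume hs: "canonical CC MM PL ST (HP act) hs \<and> lprod MM hs = a"
    then obtain cs' where cs': "hs = map hmc cs'" "ccs cs'" using canon_HP by blast
    then have "pcls act (cw cs') = a" using hs lprod_hmc ccs_ne by metis
    then show "hs = map hmc cs" using cw_unique cs cs' by metis
  qed
qed

lemma proper_HP: "proper_set CC MM PL ST (HP act)"
  unfolding proper_set_def
proof (intro ballI)
  fix h k assume h: "h \<in> HP act" and k: "k \<in> HP act"
  obtain t e where ht: "h = hmk t e" using h by (auto simp: HP_eq)
  obtain s f where ks: "k = hmk s f" using k by (auto simp: HP_eq)
  show "(ST h = ST k \<and> sigma CC MM PL h k) = (h = k)"
  proof
    assume "ST h = ST k \<and> sigma CC MM PL h k"
    then have "e = f" "t = s" using ht ks by (auto simp: Pstar_hmk dest: PX_inj sigma_hmk)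
    then show "h = k" using ht ks by simp
  next
    assume "h = k" then show "ST h = ST k \<and> sigma CC MM PL h k"
      using h HP_sub by (auto intro: sig_refl)
  qed
qed

lemma moreover_part: "\<forall>a \<in> CC. \<forall>hs. canonical CC MM PL ST (HP act) hs \<and> lprod MM hs = a
            \<longrightarrow> PL a = PL (hd hs) \<and> ST a = ST (last hs)"
proof (intro ballI allI impI)
  fix a hs assume "a \<in> CC" and hs: "canonical CC MM PL ST (HP act) hs \<and> lprod MM hs = a"
  then obtain cs where cs: "hs = map hmc cs" "ccs cs" using canon_HP by blast
  have ne: "cs \<noteq> []" using ccs_ne cs by simp
  have a: "a = pcls act (cw cs)" using hs cs(1) lprod_hmc[OF ne] by simp
  have "PL a = PX act (act (fst (hd cs)) (snd (hd cs)))" using a Pplus_cw[OF cs(2)] by simp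
  moreover have "PL (hd hs) = PX act (act (fst (hd cs)) (snd (hd cs)))"
    using cs(1) ne by (simp add: hd_map hmc_def Pplus_hmk)
  moreover have "ST a = PX act (snd (last cs))" using a Pstar_cw[OF cs(2)] by simp
  moreover have "ST (last hs) = PX act (snd (last cs))"
    using cs(1) ne by (simp add: last_map hmc_def Pstar_hmk)
  ultimately show "PL a = PL (hd hs) \<and> ST a = ST (last hs)" by simp
qed

end

theorem mainTheorem14:
  fixes act :: "'t::monoid_mult \<Rightarrow> 'x::bounded_semilattice_inf_top \<Rightarrow> 'x"
  assumes "order_preserving_action act"
  shows "proper_basis (Pcar act) (Pmul act) (Pone act) (Pplus act) (Pstar act) (HP act)
       \<and> (\<forall>a \<in> Pcar act. \<forall>hs.
            canonical (Pcar act) (Pmul act) (Pplus act) (Pstar act) (HP act) hs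
            \<and> lprod (Pmul act) hs = a
            \<longrightarrow> Pplus act a = Pplus act (hd hs) \<and> Pstar act a = Pstar act (last hs))"
proof -
  interpret opa act by (rule opa.intro) (rule assms)
  show ?thesis
    unfolding proper_basis_def basis_def
    using atomic_HP gen_HP hcf proper_HP moreover_part by blast
qed

end
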